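(* Let $n\ge1$, let $R,L\subseteq\{0,1,\dots,n-1\}$, let $S_1=\{a^{2r}\mid r\in R\}\cup\{a^{2l}b,\ a^{-2l}b^2\mid l\in L\}$, and let $S_2\subseteq \langle a^2\rangle a\cup\langle a^2\rangle ab\cup\langle a^2\rangle ab^2$, such that $S=S_1\cup S_2$ satisfies $1\notin S=S^{-1}$. Put $S_R=\{a^{2r}\mid r\in R\}$ and $S_L=\{a^{2l}\mid l\in L\}$ and assume $S_L=S_L^{-1}$. Then $\mathrm{Cay}(U_{6n},S)$ is integral if and only if both of the following hold for all $0\le j\le 2n-1$ and $0\le k\le n-1$: (1) $3\rho_j(S_R)+\chi_j(S_2)$ and $3\rho_j(S_L)+\chi_j(S_2)$ are integers; (2) $2\psi_k(S_2^2)$ is a perfect square (the square of an integer).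
   Context: For an integer $n\ge1$, $U_{6n}=\langle a,b\mid a^{2n}=b^3=1,\ a^{-1}ba=b^{-1}\rangle$, a group of order $6n$ whose elements are uniquely $a^ib^\epsilon$ with $0\le i\le 2n-1$, $\epsilon\in\{0,1,2\}$. Let $\omega=\exp(\pi\imath/n)$. Its irreducible complex characters are: the $2n$ linear characters $\chi_j$ ($0\le j\le 2n-1$) given by $\chi_j(a^{2r}b^\epsilon)=\omega^{2jr}$ and $\chi_j(a^{2r+1}b^\epsilon)=\omega^{j(2r+1)}$ for all $\epsilon\in\{0,1,2\}$; and the $n$ degree-two characters $\psi_k$ ($0\le k\le n-1$) given by $\psi_k(a^{2r})=2\omega^{2kr}$, $\psi_k(a^{2r}b)=\psi_k(a^{2r}b^2)=-\omega^{2kr}$, $\psi_k(a^{2r+1}b^\epsilon)=0$. The irreducible characters of the cyclic subgroup $\langle a\rangle$ (order $2n$) are $\rho_j$, $0\le j\le 2n-1$, with $\rho_j(a^m)=\omega^{jm}$. For a character $\chi$ and subsets $A$ of a group, $\chi(A)=\sum_{x\in A}\chi(x)$ (with $\chi(\emptyset)=0$) and $\chi(A^2)=\sum_{x_1,x_2\in A}\chi(x_1x_2)$, the sum running over all ordered pairs. For a group $G$ and $S\subseteq G$ with $1\notin S=S^{-1}$, the Cayley graph $\mathrm{Cay}(G,S)$ has vertex set $G$ and edges $\{g,sg\}$ for $g\in G,s\in S$. A graph is integral if all eigenvalues of its adjacency matrix are integers. *)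

theory Defs
  imports Complex_Main
begin

text \<open>Concrete model of U_{6n}: the element a^i b^e (0 <= i < 2n, 0 <= e < 3) is the pair (i, e).
  Relation a^{-1} b a = b^{-1} gives b^e a^j = a^j b^{(-1)^j e}.\<close>

type_synonym uelt = "int \<times> int"

definition U :: "nat \<Rightarrow> uelt set" where
  "U n = {0..<2 * int n} \<times> {0..<3}"

definition elt :: "nat \<Rightarrow> int \<Rightarrow> int \<Rightarrow> uelt" where
  "elt n i e = (i mod (2 * int n), e mod 3)"

definition umult :: "nat \<Rightarrow> uelt \<Rightarrow> uelt \<Rightarrow> uelt" where
  "umult n x y = (case x of (i, e) \<Rightarrow> case y of (j, d) \<Rightarrow>
      elt n (i + j) ((if even j then e else - e) + d))"

definition uone :: "nat \<Rightarrow> uelt" where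
  "uone n = elt n 0 0"

definition uinv :: "nat \<Rightarrow> uelt \<Rightarrow> uelt" where
  "uinv n x = (case x of (i, e) \<Rightarrow> elt n (- i) (if even i then - e else e))"

definition uinvset :: "nat \<Rightarrow> uelt set \<Rightarrow> uelt set" where
  "uinvset n A = uinv n ` A"

definition omega :: "nat \<Rightarrow> complex" where
  "omega n = exp (complex_of_real pi * \<i> / of_nat n)"

definition chi :: "nat \<Rightarrow> nat \<Rightarrow> uelt \<Rightarrow> complex" where
  "chi n j x = (case x of (i, e) \<Rightarrow>
     (if even i then omega n ^ (2 * j * nat (i div 2))
      else omega n ^ (j * (2 * nat (i div 2) + 1))))"

definition psi :: "nat \<Rightarrow> nat \<Rightarrow> uelt \<Rightarrow> complex" where
  "psi n k x = (case x of (i, e) \<Rightarrow>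
     (if even i then (if e = 0 then 2 * omega n ^ (2 * k * nat (i div 2))
                      else - (omega n ^ (2 * k * nat (i div 2))))
      else 0))"

definition rho :: "nat \<Rightarrow> nat \<Rightarrow> uelt \<Rightarrow> complex" where
  "rho n j x = omega n ^ (j * nat (fst x))"

definition charsum :: "(uelt \<Rightarrow> complex) \<Rightarrow> uelt set \<Rightarrow> complex" where
  "charsum f A = (\<Sum>x\<in>A. f x)"

definition charsum2 :: "nat \<Rightarrow> (uelt \<Rightarrow> complex) \<Rightarrow> uelt set \<Rightarrow> complex" where
  "charsum2 n f A = (\<Sum>x1\<in>A. \<Sum>x2\<in>A. f (umult n x1 x2))"

definition cay_adj :: "nat \<Rightarrow> uelt set \<Rightarrow> uelt \<Rightarrow> uelt \<Rightarrow> complex" where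
  "cay_adj n S g h = (if \<exists>s\<in>S. h = umult n s g then 1 else 0)"

definition cay_eigenvalue :: "nat \<Rightarrow> uelt set \<Rightarrow> complex \<Rightarrow> bool" where
  "cay_eigenvalue n S mu \<longleftrightarrow>
     (\<exists>v :: uelt \<Rightarrow> complex. (\<exists>g\<in>U n. v g \<noteq> 0) \<and>
        (\<forall>g\<in>U n. (\<Sum>h\<in>U n. cay_adj n S g h * v h) = mu * v g))"

definition cay_integral :: "nat \<Rightarrow> uelt set \<Rightarrow> bool" where
  "cay_integral n S \<longleftrightarrow> (\<forall>mu. cay_eigenvalue n S mu \<longrightarrow> mu \<in> \<int>)"

end

theory Submission
  imports Defs "Jordan_Normal_Form.Char_Poly" "HOL-Computational_Algebra.Polynomial"
begin

definition E :: "nat \<Rightarrow> int \<Rightarrow> complex" where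
  "E n m = cis (pi * real_of_int m / real n)"

definition Z :: "int \<Rightarrow> complex" where
  "Z m = cis (2 * pi * real_of_int m / 3)"

lemma E_add: "E n (a + b) = E n a * E n b"
  by (simp add: E_def cis_mult add_divide_distrib distrib_left)

lemma E_0[simp]: "E n 0 = 1" by (simp add: E_def)

lemma E_period: assumes "n \<ge> 1" shows "E n (2 * int n * t) = 1"
proof -
  have "pi * real_of_int (2 * int n * t) / real n = 2 * pi * real_of_int t"
    using assms by (simp add: field_simps)
  then show ?thesis by (simp add: E_def)
qed

lemma E_mod: assumes "n \<ge> 1" shows "E n (a mod (2 * int n)) = E n a"
proof -
  have "a = a mod (2 * int n) + 2 * int n * (a div (2 * int n))" by simp
  then have "E n a = E n (a mod (2 * int n)) * E n (2 * int n * (a div (2 * int n)))"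
    by (metis E_add)
  then show ?thesis using E_period[OF assms] by simp
qed

lemma E_mult_mod: assumes "n \<ge> 1" shows "E n (j * (a mod (2 * int n))) = E n (j * a)"
proof -
  have "j * a = j * (a mod (2 * int n) + 2 * int n * (a div (2 * int n)))" by simp
  also have "\<dots> = j * (a mod (2 * int n)) + 2 * int n * (j * (a div (2 * int n)))"
    by (simp add: algebra_simps)
  finally have "j * a = j * (a mod (2 * int n)) + 2 * int n * (j * (a div (2 * int n)))" .
  then have "E n (j * a) = E n (j * (a mod (2 * int n))) * E n (2 * int n * (j * (a div (2 * int n))))"
    by (metis E_add)
  then show ?thesis using E_period[OF assms] by simp
qed

lemma E_pow: "E n a ^ m = E n (int m * a)"
  by (simp add: E_def DeMoivre field_simps)

lemma omega_pow: "omega n ^ m = E n (int m)"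
proof -
  have "omega n = cis (pi / real n)"
    by (simp add: omega_def cis_conv_exp mult.commute)
  moreover have "real m * (pi / real n) = pi * real_of_int (int m) / real n" by simp
  ultimately show ?thesis by (simp add: E_def DeMoivre) (simp add: ac_simps)
qed

lemma E_neq_1: assumes "n \<ge> 1" "0 < a" "a < 2 * int n" shows "E n a \<noteq> 1"
proof
  assume "E n a = 1"
  then have "cos (pi * real_of_int a / real n) = 1"
    unfolding E_def by (metis cis.sel(1) one_complex.sel(1))
  then obtain m :: int where m: "pi * real_of_int a / real n = real_of_int m * 2 * pi"
    using cos_one_2pi_int by blast
  then have "real_of_int a = real_of_int m * 2 * real n" using assms by (simp add: field_simps)
  then have "a = m * 2 * int n" by (metis of_int_eq_iff of_int_mult of_int_numeral of_int_of_nat_eq)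
  then have a: "a = m * (2 * int n)" by simp
  with assms have "m > 0" by (simp add: zero_less_mult_iff)
  then have "1 * int n \<le> m * int n" using mult_right_mono[of 1 m "int n"] by linarith
  then show False using a assms by linarith
qed

lemma Z_add: "Z (a + b) = Z a * Z b"
  by (simp add: Z_def cis_mult add_divide_distrib distrib_left)

lemma Z_0[simp]: "Z 0 = 1" by (simp add: Z_def)

lemma Z_mod: "Z (a mod 3) = Z a"
proof -
  have "a = a mod 3 + 3 * (a div 3)" by simp
  then have "Z a = Z (a mod 3) * Z (3 * (a div 3))" by (metis Z_add)
  moreover have "Z (3 * (a div 3)) = 1"
  proof -
    have "2 * pi * real_of_int (3 * (a div 3)) / 3 = 2 * pi * real_of_int (a div 3)" by simp
    moreover have "cis (2 * pi * real_of_int (a div 3)) = 1" by simp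
    ultimately show ?thesis by (simp only: Z_def)
  qed
  ultimately show ?thesis by simp
qed

lemma Z_12: "Z 1 + Z 2 = -1"
proof -
  have c1: "cos (2 * pi / 3) = -1/2" by (rule cos_120)
  have s1: "sin (2 * pi / 3) = sqrt 3 / 2" by (rule sin_120)
  have eq: "4 * pi / 3 = pi + pi / 3" by simp
  have c2: "cos (4 * pi / 3) = -1/2" unfolding eq cos_add[of pi "pi/3"] by (simp add: cos_60)
  have s2: "sin (4 * pi / 3) = - (sqrt 3 / 2)" unfolding eq sin_add[of pi "pi/3"] by (simp add: sin_60)
  have "Z 1 = cis (2 * pi / 3)" "Z 2 = cis (4 * pi / 3)" by (simp_all add: Z_def)
  then show ?thesis
    by (simp add: complex_eq_iff c1 s1 c2 s2)
qed

lemma Z_neg1: "Z (-1) = Z 2" using Z_mod[of "-1"] Z_mod[of 2] by simp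
lemma Z_neg2: "Z (-2) = Z 1" using Z_mod[of "-2"] Z_mod[of 1] by simp


lemma U_iff: "(i, e) \<in> U n \<longleftrightarrow> 0 \<le> i \<and> i < 2 * int n \<and> 0 \<le> e \<and> e < 3"
  by (auto simp: U_def)

lemma elt_U: "n \<ge> 1 \<Longrightarrow> elt n a b \<in> U n"
  by (simp add: elt_def U_def)

lemma elt_self: "(i, e) \<in> U n \<Longrightarrow> elt n i e = (i, e)"
  by (simp add: elt_def U_def)

lemma elt_eq_iff: "elt n a b = elt n a' b' \<longleftrightarrow> a mod (2 * int n) = a' mod (2 * int n) \<and> b mod 3 = b' mod 3"
  by (simp add: elt_def)

lemma even_mod2n: "even (a mod (2 * int n)) \<longleftrightarrow> even a"
proof -
  have "(a mod (2 * int n)) mod 2 = a mod 2"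
    by (simp add: mod_mod_cancel)
  then show ?thesis by (metis even_iff_mod_2_eq_zero)
qed

lemma umult_elt: "umult n (elt n i e) (elt n j d) = elt n (i + j) ((if even j then e else - e) + d)"
proof -
  have p: "even (j mod (2 * int n)) \<longleftrightarrow> even j" by (rule even_mod2n)
  have 1: "(i mod (2 * int n) + j mod (2 * int n)) mod (2 * int n) = (i + j) mod (2 * int n)"
    by (simp add: mod_add_eq)
  have 2: "((if even j then e mod 3 else - (e mod 3)) + d mod 3) mod 3 = ((if even j then e else - e) + d) mod 3"
    by (cases "even j") (simp_all add: mod_add_eq mod_minus_eq mod_diff_eq)
  show ?thesis
    unfolding umult_def elt_def[of n i e] elt_def[of n j d] using p
    by (simp add: elt_eq_iff 1 2 [unfolded])
qed

lemma uinv_elt: "uinv n (elt n i e) = elt n (- i) (if even i then - e else e)"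
proof -
  have p: "even (i mod (2 * int n)) \<longleftrightarrow> even i" by (rule even_mod2n)
  have 1: "(- (i mod (2 * int n))) mod (2 * int n) = (- i) mod (2 * int n)"
    by (simp add: mod_minus_eq)
  have 2: "(if even i then - (e mod 3) else e mod 3) mod 3 = (if even i then - e else e) mod 3"
    by (cases "even i") (simp_all add: mod_minus_eq)
  show ?thesis
    unfolding uinv_def elt_def[of n i e] using p
    by (simp add: elt_eq_iff 1 2)
qed

lemma U_cases: assumes "x \<in> U n" obtains i e where "x = elt n i e" "x = (i, e)" "(i, e) \<in> U n"
  using assms elt_self by (cases x) auto

lemma umult_U: "n \<ge> 1 \<Longrightarrow> umult n x y \<in> U n"
  by (cases x; cases y) (simp add: umult_def elt_U)

lemma uinv_U: "n \<ge> 1 \<Longrightarrow> uinv n x \<in> U n"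
  by (cases x) (simp add: uinv_def elt_U)

lemma inv_left: assumes "s \<in> U n" "g \<in> U n"
  shows "umult n (uinv n s) (umult n s g) = g"
proof -
  obtain i e where s0: "s = (i, e)" by (cases s)
  have s: "s = elt n i e" "s = (i, e)" using s0 assms(1) elt_self by auto
  obtain j d where g0: "g = (j, d)" by (cases g)
  have g: "g = elt n j d" "g = (j, d)" using g0 assms(2) elt_self by auto
  have "umult n (uinv n s) (umult n s g) = elt n j d"
    unfolding s g(1) umult_elt uinv_elt
    by (cases "even i"; cases "even j") (auto simp: elt_eq_iff)
  then show ?thesis using g by simp
qed

lemma inv_right: assumes "s \<in> U n" "h \<in> U n"
  shows "umult n s (umult n (uinv n s) h) = h"
proof -
  obtain i e where s0: "s = (i, e)" by (cases s)
  have s: "s = elt n i e" "s = (i, e)" using s0 assms(1) elt_self by auto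
  obtain j d where g0: "h = (j, d)" by (cases h)
  have g: "h = elt n j d" "h = (j, d)" using g0 assms(2) elt_self by auto
  have "umult n s (umult n (uinv n s) h) = elt n j d"
    unfolding s g(1) umult_elt uinv_elt
    by (cases "even i"; cases "even j") (auto simp: elt_eq_iff)
  then show ?thesis using g by simp
qed

lemma mult_inv_right_elt:
  "umult n (umult n (elt n i e) (elt n j d)) (uinv n (elt n j d)) = elt n i e"
proof -
  have "umult n (umult n (elt n i e) (elt n j d)) (uinv n (elt n j d))
     = umult n (elt n (i + j) ((if even j then e else - e) + d)) (elt n (- j) (if even j then - d else d))"
    by (simp only: umult_elt uinv_elt)
  also have "\<dots> = elt n (i + j + - j) ((if even (- j) then ((if even j then e else - e) + d) else - ((if even j then e else - e) + d)) + (if even j then - d else d))"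
    by (simp only: umult_elt)
  also have "\<dots> = elt n i e"
    by (cases "even j") (simp_all add: elt_eq_iff)
  finally show ?thesis .
qed

lemma mult_inv_right: assumes "s \<in> U n" "g \<in> U n"
  shows "umult n (umult n s g) (uinv n g) = s"
proof -
  obtain i e where s0: "s = (i, e)" by (cases s)
  have s: "s = elt n i e" using s0 assms(1) elt_self by auto
  obtain j d where g0: "g = (j, d)" by (cases g)
  have g: "g = elt n j d" using g0 assms(2) elt_self by auto
  show ?thesis unfolding s g by (rule mult_inv_right_elt)
qed

lemma right_cancel: assumes "s \<in> U n" "s' \<in> U n" "g \<in> U n" "umult n s g = umult n s' g"
  shows "s = s'"
proof -
  have "s = umult n (umult n s g) (uinv n g)" using mult_inv_right[OF assms(1,3)] by simp
  also have "\<dots> = umult n (umult n s' g) (uinv n g)" using assms(4) by simp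
  also have "\<dots> = s'" using mult_inv_right[OF assms(2,3)] by simp
  finally show ?thesis .
qed

lemma uinv_uinv_elt: "uinv n (uinv n (elt n i e)) = elt n i e"
proof -
  have "uinv n (uinv n (elt n i e)) = uinv n (elt n (- i) (if even i then - e else e))"
    by (simp only: uinv_elt)
  also have "\<dots> = elt n (- (- i)) (if even (- i) then - (if even i then - e else e) else (if even i then - e else e))"
    by (simp only: uinv_elt)
  also have "\<dots> = elt n i e" by (cases "even i") simp_all
  finally show ?thesis .
qed

lemma uinv_uinv: assumes "x \<in> U n" shows "uinv n (uinv n x) = x"
proof -
  obtain i e where s0: "x = (i, e)" by (cases x)
  have s: "x = elt n i e" using s0 assms(1) elt_self by auto
  show ?thesis unfolding s by (rule uinv_uinv_elt)
qed

lemma inv_mult_one_elt: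
  "umult n (uinv n (elt n i e)) (elt n j d) = elt n 0 0 \<longleftrightarrow> elt n j d = elt n i e"
proof -
  have "umult n (uinv n (elt n i e)) (elt n j d) = umult n (elt n (- i) (if even i then - e else e)) (elt n j d)"
    by (simp only: uinv_elt)
  also have "\<dots> = elt n (- i + j) ((if even j then (if even i then - e else e) else - (if even i then - e else e)) + d)"
    by (simp only: umult_elt)
  finally have eq: "umult n (uinv n (elt n i e)) (elt n j d) = \<dots>" .
  have a: "(- i + j) mod (2 * int n) = 0 mod (2 * int n) \<longleftrightarrow> j mod (2 * int n) = i mod (2 * int n)"
    by (simp add: mod_eq_dvd_iff mod_eq_0_iff_dvd)
  show ?thesis
  proof (cases "j mod (2 * int n) = i mod (2 * int n)")
    case True
    then have "even j = even i" using even_mod2n[of j n] even_mod2n[of i n] by simp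
    then show ?thesis unfolding eq elt_eq_iff a using True
      by (cases "even i") (simp_all add: mod_eq_dvd_iff mod_eq_0_iff_dvd)
  next
    case False
    then show ?thesis unfolding eq elt_eq_iff a by simp
  qed
qed

lemma inv_mult_one: assumes "g \<in> U n" "h \<in> U n"
  shows "umult n (uinv n g) h = (0, 0) \<longleftrightarrow> h = g"
proof -
  obtain i e where s0: "g = (i, e)" by (cases g)
  have s: "g = elt n i e" using s0 assms(1) elt_self by auto
  obtain j d where g0: "h = (j, d)" by (cases h)
  have g: "h = elt n j d" using g0 assms(2) elt_self by auto
  have z: "(0::int, 0::int) = elt n 0 0" by (simp add: elt_def)
  show ?thesis unfolding s g z by (rule inv_mult_one_elt)
qed


definition rep :: "nat \<Rightarrow> int \<Rightarrow> uelt \<Rightarrow> nat \<Rightarrow> nat \<Rightarrow> complex" where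
  "rep n k x p q = (if even (int p + int q + fst x)
      then E n (k * fst x) * Z (if q = 0 then snd x else - snd x) else 0)"

lemma chi_E: assumes "x \<in> U n" shows "chi n j x = E n (int j * fst x)"
proof -
  obtain i e where x: "x = (i, e)" by (cases x)
  have i0: "0 \<le> i" using assms x by (simp add: U_def)
  show ?thesis
  proof (cases "even i")
    case True
    have r0: "0 \<le> i div 2" using i0 by simp
    have "int (2 * j * nat (i div 2)) = int j * (2 * (i div 2))" using r0 by simp
    also have "2 * (i div 2) = i" using True by simp
    finally have eq: "int (2 * j * nat (i div 2)) = int j * i" .
    have om: "omega n ^ (2 * j * nat (i div 2)) = E n (int j * i)" by (simp only: omega_pow eq)
    show ?thesis using True x om by (simp add: chi_def)
  next
    case False
    have r0: "0 \<le> i div 2" using i0 by simp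
    have "int (j * (2 * nat (i div 2) + 1)) = int j * (2 * (i div 2) + 1)" using r0 by (simp add: algebra_simps)
    also have "2 * (i div 2) + 1 = i" using False by simp
    finally have eq: "int (j * (2 * nat (i div 2) + 1)) = int j * i" .
    have om: "omega n ^ (j * (2 * nat (i div 2) + 1)) = E n (int j * i)" by (simp only: omega_pow eq)
    show ?thesis using False x om by (simp add: chi_def)
  qed
qed

lemma rho_E: assumes "0 \<le> fst x" shows "rho n j x = E n (int j * fst x)"
  using assms by (simp add: rho_def omega_pow)

lemma Z_neg_mod: "Z (- (a mod 3)) = Z (- a)"
  by (metis Z_mod mod_minus_eq)

lemma Z_diff: "Z (a - b) = Z a * Z (- b)" by (metis Z_add diff_conv_add_uminus)
lemma Z_uminus_add: "Z (- (a + b)) = Z (- a) * Z (- b)" by (metis Z_add minus_add_distrib)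
lemma Z_uminus_diff: "Z (- (a - b)) = Z (- a) * Z b" by (metis Z_add minus_diff_eq diff_conv_add_uminus add.commute)

lemma psi_rep: assumes "x \<in> U n"
  shows "psi n k x = rep n (int k) x 0 0 + rep n (int k) x 1 1"
proof -
  obtain i e where x: "x = (i, e)" by (cases x)
  have i0: "0 \<le> i" and e: "0 \<le> e" "e < 3" using assms x by (auto simp: U_def)
  show ?thesis
  proof (cases "even i")
    case True
    have r0: "0 \<le> i div 2" using i0 by simp
    have "int (2 * k * nat (i div 2)) = int k * (2 * (i div 2))" using r0 by simp
    also have "2 * (i div 2) = i" using True by simp
    finally have eq: "int (2 * k * nat (i div 2)) = int k * i" .
    have om: "omega n ^ (2 * k * nat (i div 2)) = E n (int k * i)" by (simp only: omega_pow eq)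
    have "e = 0 \<or> e = 1 \<or> e = 2" using e by auto
    have key: "\<And>w. - w = Z 1 * w + Z 2 * w" using Z_12 by (metis distrib_right mult_minus_left mult_1_left)
    then show ?thesis using True x om Z_neg1 Z_neg2 \<open>e = 0 \<or> e = 1 \<or> e = 2\<close>
      by (auto simp: psi_def rep_def)
  next
    case False
    then show ?thesis using x by (simp add: psi_def rep_def)
  qed
qed

lemma fst_umult: "fst (umult n x y) = (fst x + fst y) mod (2 * int n)"
  by (cases x; cases y) (simp add: umult_def elt_def)

lemma snd_umult: "snd (umult n x y) = ((if even (fst y) then snd x else - snd x) + snd y) mod 3"
  by (cases x; cases y) (simp add: umult_def elt_def)

lemma E_umult: assumes "n \<ge> 1"
  shows "E n (j * fst (umult n x y)) = E n (j * fst x) * E n (j * fst y)"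
  unfolding fst_umult E_mult_mod[OF assms] by (simp add: distrib_left E_add)

lemma sum2: "(\<Sum>r<(2::nat). f r) = f 0 + f 1"
  by (simp add: numeral_2_eq_2)

lemma rep_mult: assumes "n \<ge> 1" "p < 2" "q < 2"
  shows "rep n k (umult n x y) p q = (\<Sum>r<2. rep n k x p r * rep n k y r q)"
proof -
  obtain i e where x: "x = (i, e)" by (cases x)
  obtain j d where y: "y = (j, d)" by (cases y)
  have f: "fst (umult n x y) = (i + j) mod (2 * int n)" using x y by (simp add: fst_umult)
  have s: "snd (umult n x y) = ((if even j then e else - e) + d) mod 3" using x y by (simp add: snd_umult)
  have par: "even (int p + int q + (i + j) mod (2 * int n)) \<longleftrightarrow> even (int p + int q + i + j)"
    using even_mod2n[of "i + j" n] by (auto simp: even_add)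
  have Ek: "E n (k * ((i + j) mod (2 * int n))) = E n (k * i) * E n (k * j)"
    by (simp add: E_mult_mod[OF assms(1)] distrib_left E_add)
  have Zs: "Z (((if even j then e else - e) + d) mod 3) = Z ((if even j then e else - e) + d)"
    by (rule Z_mod)
  have Zs': "Z (- (((if even j then e else - e) + d) mod 3)) = Z (- ((if even j then e else - e) + d))"
    by (rule Z_neg_mod)
  have pq: "p = 0 \<or> p = 1" "q = 0 \<or> q = 1" using assms by auto
  show ?thesis
    unfolding sum2 rep_def f s par Ek using pq x y
    by (cases "even i"; cases "even j") (auto simp: Z_add even_add Z_mod Z_neg_mod Z_diff Z_uminus_add Z_uminus_diff)
qed

lemma rep_one: assumes "p < 2" "q < 2" shows "rep n k (0, 0) p q = (if p = q then 1 else 0)"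
  using assms by (auto simp: rep_def less_2_cases_iff)


lemma finite_U[simp]: "finite (U n)" by (simp add: U_def)

lemma zero_U: "n \<ge> 1 \<Longrightarrow> (0, 0) \<in> U n" by (simp add: U_def)

lemma adj_sum: assumes n: "n \<ge> 1" and S: "S \<subseteq> U n" and g: "g \<in> U n"
  shows "(\<Sum>h\<in>U n. cay_adj n S g h * v h) = (\<Sum>s\<in>S. v (umult n s g))"
proof -
  define T where "T = (\<lambda>s. umult n s g) ` S"
  have TU: "T \<subseteq> U n" unfolding T_def using umult_U[OF n] by blast
  have "(\<Sum>h\<in>U n. cay_adj n S g h * v h) = (\<Sum>h\<in>U n. if h \<in> T then v h else 0)"
    by (rule sum.cong) (auto simp: cay_adj_def T_def)
  also have "\<dots> = sum v (U n \<inter> T)" by (simp add: sum.inter_restrict)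
  also have "U n \<inter> T = T" using TU by blast
  also have "sum v T = (\<Sum>s\<in>S. v (umult n s g))"
    unfolding T_def
  proof (rule sum.reindex[unfolded comp_def])
    show "inj_on (\<lambda>s. umult n s g) S"
      unfolding inj_on_def using right_cancel[OF _ _ g] S by blast
  qed
  finally show ?thesis .
qed

lemma reindex_mult: assumes n: "n \<ge> 1" and s: "s \<in> U n"
  shows "(\<Sum>g\<in>U n. f g * v (umult n s g)) = (\<Sum>h\<in>U n. f (umult n (uinv n s) h) * v h)"
proof (rule sum.reindex_bij_witness[where j = "\<lambda>g. umult n s g" and i = "\<lambda>h. umult n (uinv n s) h"])
  fix a assume "a \<in> U n"
  then show "umult n (uinv n s) (umult n s a) = a" using inv_left[OF s] by simp
  show "umult n s a \<in> U n" using umult_U[OF n] by simp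
  show "f (umult n (uinv n s) (umult n s a)) * v (umult n s a) = f a * v (umult n s a)"
    using inv_left[OF s \<open>a \<in> U n\<close>] by simp
next
  fix b assume "b \<in> U n"
  then show "umult n s (umult n (uinv n s) b) = b" using inv_right[OF s] by simp
  show "umult n (uinv n s) b \<in> U n" using umult_U[OF n] by simp
qed

lemma sym_sum: assumes S: "S \<subseteq> U n" and sym: "uinvset n S = S"
  shows "(\<Sum>s\<in>S. f (uinv n s)) = (\<Sum>s\<in>S. f s)"
proof -
  have inj: "inj_on (uinv n) S"
    unfolding inj_on_def using S uinv_uinv by (metis subsetD)
  have "(\<Sum>s\<in>S. f (uinv n s)) = sum f (uinv n ` S)"
    using sum.reindex[OF inj, of f] by (simp add: comp_def)
  also have "uinv n ` S = S" using sym by (simp add: uinvset_def)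
  finally show ?thesis .
qed

lemma lin_eig: assumes n: "n \<ge> 1" and S: "S \<subseteq> U n"
  shows "cay_eigenvalue n S (\<Sum>s\<in>S. E n (j * fst s))"
  unfolding cay_eigenvalue_def
proof (intro exI[of _ "\<lambda>g. E n (j * fst g)"] conjI ballI)
  show "\<exists>g\<in>U n. E n (j * fst g) \<noteq> 0"
    using zero_U[OF n] by force
  fix g assume g: "g \<in> U n"
  have "(\<Sum>h\<in>U n. cay_adj n S g h * E n (j * fst h)) = (\<Sum>s\<in>S. E n (j * fst (umult n s g)))"
    by (rule adj_sum[OF n S g])
  also have "\<dots> = (\<Sum>s\<in>S. E n (j * fst s)) * E n (j * fst g)"
    by (simp add: E_umult[OF n] sum_distrib_right)
  finally show "(\<Sum>h\<in>U n. cay_adj n S g h * E n (j * fst h)) = (\<Sum>s\<in>S. E n (j * fst s)) * E n (j * fst g)" .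
qed

lemma twodim_eig: assumes n: "n \<ge> 1" and S: "S \<subseteq> U n" and q0: "q0 < 2" and w0: "w q0 \<noteq> 0"
  and lev: "\<And>r. r < 2 \<Longrightarrow> (\<Sum>p<2. w p * (\<Sum>s\<in>S. rep n k s p r)) = mu * w r"
  shows "cay_eigenvalue n S mu"
  unfolding cay_eigenvalue_def
proof (intro exI[of _ "\<lambda>g. \<Sum>p<2. w p * rep n k g p q0"] conjI ballI)
  show "\<exists>g\<in>U n. (\<Sum>p<2. w p * rep n k g p q0) \<noteq> 0"
  proof (intro bexI[OF _ zero_U[OF n]])
    have "(\<Sum>p<2. w p * rep n k (0, 0) p q0) = (\<Sum>p<2. (if p = q0 then w q0 else 0))"
      by (rule sum.cong) (use q0 in \<open>auto simp: rep_one\<close>)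
    also have "\<dots> = w q0" using q0 by simp
    finally show "(\<Sum>p<2. w p * rep n k (0, 0) p q0) \<noteq> 0" using w0 by simp
  qed
  fix g assume g: "g \<in> U n"
  have "(\<Sum>h\<in>U n. cay_adj n S g h * (\<Sum>p<2. w p * rep n k h p q0))
      = (\<Sum>s\<in>S. \<Sum>p<2. w p * rep n k (umult n s g) p q0)"
    by (rule adj_sum[OF n S g])
  also have "\<dots> = (\<Sum>s\<in>S. \<Sum>p<2. w p * (\<Sum>r<2. rep n k s p r * rep n k g r q0))"
    by (intro sum.cong refl) (use q0 n in \<open>simp add: rep_mult\<close>)
  also have "\<dots> = (\<Sum>r<2. (\<Sum>p<2. w p * (\<Sum>s\<in>S. rep n k s p r)) * rep n k g r q0)"
    by (simp add: sum2 sum.distrib sum_distrib_left sum_distrib_right algebra_simps)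
  also have "\<dots> = (\<Sum>r<2. mu * w r * rep n k g r q0)"
    by (intro sum.cong refl) (simp add: lev)
  also have "\<dots> = mu * (\<Sum>p<2. w p * rep n k g p q0)"
    by (simp add: sum_distrib_left algebra_simps)
  finally show "(\<Sum>h\<in>U n. cay_adj n S g h * (\<Sum>p<2. w p * rep n k h p q0)) = mu * (\<Sum>p<2. w p * rep n k g p q0)" .
qed


lemma lin_fourier: assumes n: "n \<ge> 1" and S: "S \<subseteq> U n" and sym: "uinvset n S = S"
  and ev: "\<forall>g\<in>U n. (\<Sum>s\<in>S. v (umult n s g)) = mu * v g"
  shows "mu * (\<Sum>g\<in>U n. E n (j * fst g) * v g) = (\<Sum>s\<in>S. E n (j * fst s)) * (\<Sum>g\<in>U n. E n (j * fst g) * v g)"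
proof -
  have sU: "\<And>s. s \<in> S \<Longrightarrow> uinv n s \<in> U n" using uinv_U[OF n] by simp
  have "mu * (\<Sum>g\<in>U n. E n (j * fst g) * v g) = (\<Sum>g\<in>U n. E n (j * fst g) * (mu * v g))"
    by (simp add: sum_distrib_left algebra_simps)
  also have "\<dots> = (\<Sum>g\<in>U n. E n (j * fst g) * (\<Sum>s\<in>S. v (umult n s g)))"
    using ev by simp
  also have "\<dots> = (\<Sum>s\<in>S. \<Sum>g\<in>U n. E n (j * fst g) * v (umult n s g))"
    by (simp add: sum_distrib_left sum.swap[of _ "U n"])
  also have "\<dots> = (\<Sum>s\<in>S. \<Sum>h\<in>U n. E n (j * fst (umult n (uinv n s) h)) * v h)"
    by (intro sum.cong refl reindex_mult[OF n]) (use S in auto)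
  also have "\<dots> = (\<Sum>s\<in>S. E n (j * fst (uinv n s)) * (\<Sum>h\<in>U n. E n (j * fst h) * v h))"
    by (simp add: E_umult[OF n] sum_distrib_left algebra_simps)
  also have "\<dots> = (\<Sum>s\<in>S. E n (j * fst (uinv n s))) * (\<Sum>h\<in>U n. E n (j * fst h) * v h)"
    by (simp add: sum_distrib_right)
  also have "(\<Sum>s\<in>S. E n (j * fst (uinv n s))) = (\<Sum>s\<in>S. E n (j * fst s))"
    using sym_sum[OF S sym, of "\<lambda>s. E n (j * fst s)"] by simp
  finally show ?thesis .
qed

lemma rep_fourier: assumes n: "n \<ge> 1" and S: "S \<subseteq> U n" and sym: "uinvset n S = S"
  and ev: "\<forall>g\<in>U n. (\<Sum>s\<in>S. v (umult n s g)) = mu * v g" and p: "p < 2" and q: "q < 2"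
  shows "mu * (\<Sum>g\<in>U n. rep n k g p q * v g) = (\<Sum>r<2. (\<Sum>s\<in>S. rep n k s p r) * (\<Sum>g\<in>U n. rep n k g r q * v g))"
proof -
  have "mu * (\<Sum>g\<in>U n. rep n k g p q * v g) = (\<Sum>g\<in>U n. rep n k g p q * (mu * v g))"
    by (simp add: sum_distrib_left algebra_simps)
  also have "\<dots> = (\<Sum>g\<in>U n. rep n k g p q * (\<Sum>s\<in>S. v (umult n s g)))"
    using ev by simp
  also have "\<dots> = (\<Sum>s\<in>S. \<Sum>g\<in>U n. rep n k g p q * v (umult n s g))"
    by (simp add: sum_distrib_left sum.swap[of _ "U n"])
  also have "\<dots> = (\<Sum>s\<in>S. \<Sum>h\<in>U n. rep n k (umult n (uinv n s) h) p q * v h)"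
    by (intro sum.cong refl reindex_mult[OF n]) (use S in auto)
  also have "\<dots> = (\<Sum>s\<in>S. \<Sum>h\<in>U n. (\<Sum>r<2. rep n k (uinv n s) p r * rep n k h r q) * v h)"
    by (intro sum.cong refl) (simp add: rep_mult[OF n p q])
  also have "\<dots> = (\<Sum>r<2. (\<Sum>s\<in>S. rep n k (uinv n s) p r) * (\<Sum>g\<in>U n. rep n k g r q * v g))"
    by (simp add: sum2 sum.distrib sum_product distrib_right mult.assoc)
  also have "\<dots> = (\<Sum>r<2. (\<Sum>s\<in>S. rep n k s p r) * (\<Sum>g\<in>U n. rep n k g r q * v g))"
    using sym_sum[OF S sym, of "\<lambda>s. rep n k s p _"] by simp
  finally show ?thesis .
qed

lemma geo1: assumes n: "n \<ge> 1" and i: "0 \<le> i" "i < 2 * int n"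
  shows "(\<Sum>j<2 * n. E n (int j * i)) = (if i = 0 then of_nat (2 * n) else 0)"
proof (cases "i = 0")
  case True then show ?thesis by simp
next
  case False
  then have ne: "E n i \<noteq> 1" using E_neq_1[OF n] i by simp
  have "(\<Sum>j<2 * n. E n (int j * i)) = (\<Sum>j<2 * n. E n i ^ j)" by (simp add: E_pow)
  also have "\<dots> = (E n i ^ (2 * n) - 1) / (E n i - 1)" by (rule geometric_sum[OF ne])
  also have "E n i ^ (2 * n) = 1" using E_period[OF n, of i] by (simp add: E_pow)
  finally show ?thesis using False by simp
qed

lemma geo2: assumes n: "n \<ge> 1" and r: "0 \<le> r" "r < int n"
  shows "(\<Sum>k<n. E n (int k * (2 * r))) = (if r = 0 then of_nat n else 0)"
proof (cases "r = 0")
  case True then show ?thesis by simp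
next
  case False
  then have ne: "E n (2 * r) \<noteq> 1" using E_neq_1[OF n, of "2 * r"] r by simp
  have "(\<Sum>k<n. E n (int k * (2 * r))) = (\<Sum>k<n. E n (2 * r) ^ k)" by (simp add: E_pow)
  also have "\<dots> = (E n (2 * r) ^ n - 1) / (E n (2 * r) - 1)" by (rule geometric_sum[OF ne])
  also have "E n (2 * r) ^ n = 1" using E_period[OF n, of r] by (simp add: E_pow algebra_simps)
  finally show ?thesis using False by simp
qed

lemma phi: assumes n: "n \<ge> 1" and x: "x \<in> U n"
  shows "(\<Sum>j<2 * n. E n (int j * fst x)) + 2 * (\<Sum>k<n. rep n (int k) x 0 0 + rep n (int k) x 1 1)
    = (if x = (0, 0) then of_nat (6 * n) else 0)"
proof -
  obtain i e where xe: "x = (i, e)" by (cases x)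
  have i: "0 \<le> i" "i < 2 * int n" and e: "0 \<le> e" "e < 3" using x xe by (auto simp: U_def)
  show ?thesis
  proof (cases "even i")
    case False
    then have "i \<noteq> 0" by auto
    then show ?thesis using xe geo1[OF n i] False by (simp add: rep_def)
  next
    case True
    then obtain r where r: "i = 2 * r" by blast
    have r0: "0 \<le> r" "r < int n" using i r by auto
    have "(\<Sum>k<n. rep n (int k) x 0 0 + rep n (int k) x 1 1) = (\<Sum>k<n. E n (int k * (2 * r)) * (Z e + Z (- e)))"
      using xe r by (simp add: rep_def algebra_simps)
    also have "\<dots> = (Z e + Z (- e)) * (\<Sum>k<n. E n (int k * (2 * r)))"
      by (simp add: sum_distrib_left algebra_simps)
    also have "\<dots> = (Z e + Z (- e)) * (if r = 0 then of_nat n else 0)"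
      using geo2[OF n r0] by simp
    finally have s2: "(\<Sum>k<n. rep n (int k) x 0 0 + rep n (int k) x 1 1) = (Z e + Z (- e)) * (if r = 0 then of_nat n else 0)" .
    have ecases: "e = 0 \<or> e = 1 \<or> e = 2" using e by auto
    show ?thesis
    proof (cases "r = 0")
      case False
      then show ?thesis using s2 geo1[OF n i] xe r by simp
    next
      case True
      then have i0: "i = 0" using r by simp
      have Zsum: "Z e + Z (- e) = (if e = 0 then 2 else -1)"
        using ecases Z_12 Z_neg1 Z_neg2 by (auto simp: add.commute)
      show ?thesis
        using s2 geo1[OF n i] xe i0 True Zsum by (auto simp: algebra_simps)
    qed
  qed
qed


lemma sum_split_helper: "(\<Sum>h\<in>X. (v h::complex) * (a h + 2 * b h)) = (\<Sum>h\<in>X. v h * a h) + 2 * (\<Sum>h\<in>X. v h * b h)"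
  by (simp add: distrib_left sum.distrib sum_distrib_left mult.left_commute)

lemma inversion: assumes n: "n \<ge> 1" and g0: "g0 \<in> U n"
  and hF: "\<forall>j<2 * n. (\<Sum>g\<in>U n. E n (int j * fst g) * v g) = 0"
  and hK: "\<forall>k<n. \<forall>p<2. \<forall>q<2. (\<Sum>g\<in>U n. rep n (int k) g p q * v g) = 0"
  shows "v g0 = 0"
proof -
  define y where "y = uinv n g0"
  have y: "y \<in> U n" using uinv_U[OF n] y_def by simp
  define Phi where "Phi x = (\<Sum>j<2 * n. E n (int j * fst x)) + 2 * (\<Sum>k<n. rep n (int k) x 0 0 + rep n (int k) x 1 1)" for x
  define F where "F j = (\<Sum>g\<in>U n. E n (int j * fst g) * v g)" for j
  define K where "K k p q = (\<Sum>g\<in>U n. rep n (int k) g p q * v g)" for k p q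
  have "(\<Sum>h\<in>U n. v h * Phi (umult n y h)) = (\<Sum>h\<in>U n. v h * (if umult n y h = (0, 0) then of_nat (6 * n) else 0))"
  proof (intro sum.cong refl)
    fix h assume "h \<in> U n"
    have "Phi (umult n y h) = (if umult n y h = (0, 0) then of_nat (6 * n) else 0)"
      unfolding Phi_def by (rule phi[OF n umult_U[OF n]])
    then show "v h * Phi (umult n y h) = v h * (if umult n y h = (0, 0) then of_nat (6 * n) else 0)" by simp
  qed
  also have "\<dots> = (\<Sum>h\<in>U n. if h = g0 then v h * of_nat (6 * n) else 0)"
    by (intro sum.cong refl) (simp add: y_def inv_mult_one[OF g0])
  also have "\<dots> = v g0 * of_nat (6 * n)" using g0 by simp
  finally have A: "(\<Sum>h\<in>U n. v h * Phi (umult n y h)) = v g0 * of_nat (6 * n)" .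
  have P: "Phi (umult n y h) = (\<Sum>j<2 * n. E n (int j * fst y) * E n (int j * fst h))
     + 2 * (\<Sum>k<n. rep n (int k) y 0 0 * rep n (int k) h 0 0 + rep n (int k) y 0 1 * rep n (int k) h 1 0
             + rep n (int k) y 1 0 * rep n (int k) h 0 1 + rep n (int k) y 1 1 * rep n (int k) h 1 1)" for h
    unfolding Phi_def by (simp add: E_umult[OF n] rep_mult[OF n] sum2 algebra_simps)
  have S1: "(\<Sum>h\<in>U n. v h * (\<Sum>j<2 * n. E n (int j * fst y) * E n (int j * fst h)))
      = (\<Sum>j<2 * n. E n (int j * fst y) * F j)"
  proof -
    have "(\<Sum>h\<in>U n. v h * (\<Sum>j<2 * n. E n (int j * fst y) * E n (int j * fst h)))
       = (\<Sum>h\<in>U n. \<Sum>j<2 * n. E n (int j * fst y) * (E n (int j * fst h) * v h))"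
      by (simp add: sum_distrib_left algebra_simps)
    also have "\<dots> = (\<Sum>j<2 * n. \<Sum>h\<in>U n. E n (int j * fst y) * (E n (int j * fst h) * v h))"
      by (rule sum.swap)
    also have "\<dots> = (\<Sum>j<2 * n. E n (int j * fst y) * F j)"
      unfolding F_def by (simp add: sum_distrib_left)
    finally show ?thesis .
  qed
  have S2: "(\<Sum>h\<in>U n. v h * (\<Sum>k<n. rep n (int k) y 0 0 * rep n (int k) h 0 0 + rep n (int k) y 0 1 * rep n (int k) h 1 0
             + rep n (int k) y 1 0 * rep n (int k) h 0 1 + rep n (int k) y 1 1 * rep n (int k) h 1 1))
      = (\<Sum>k<n. rep n (int k) y 0 0 * K k 0 0 + rep n (int k) y 0 1 * K k 1 0
             + rep n (int k) y 1 0 * K k 0 1 + rep n (int k) y 1 1 * K k 1 1)"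
  proof -
    have "(\<Sum>h\<in>U n. v h * (\<Sum>k<n. rep n (int k) y 0 0 * rep n (int k) h 0 0 + rep n (int k) y 0 1 * rep n (int k) h 1 0
             + rep n (int k) y 1 0 * rep n (int k) h 0 1 + rep n (int k) y 1 1 * rep n (int k) h 1 1))
      = (\<Sum>h\<in>U n. \<Sum>k<n. rep n (int k) y 0 0 * (rep n (int k) h 0 0 * v h) + rep n (int k) y 0 1 * (rep n (int k) h 1 0 * v h)
             + rep n (int k) y 1 0 * (rep n (int k) h 0 1 * v h) + rep n (int k) y 1 1 * (rep n (int k) h 1 1 * v h))"
      by (simp add: sum_distrib_left algebra_simps)
    also have "\<dots> = (\<Sum>k<n. \<Sum>h\<in>U n. rep n (int k) y 0 0 * (rep n (int k) h 0 0 * v h) + rep n (int k) y 0 1 * (rep n (int k) h 1 0 * v h)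
             + rep n (int k) y 1 0 * (rep n (int k) h 0 1 * v h) + rep n (int k) y 1 1 * (rep n (int k) h 1 1 * v h))"
      by (rule sum.swap)
    also have "\<dots> = (\<Sum>k<n. rep n (int k) y 0 0 * K k 0 0 + rep n (int k) y 0 1 * K k 1 0
             + rep n (int k) y 1 0 * K k 0 1 + rep n (int k) y 1 1 * K k 1 1)"
      unfolding K_def by (simp add: sum.distrib sum_distrib_left)
    finally show ?thesis .
  qed
  have "(\<Sum>h\<in>U n. v h * Phi (umult n y h)) = (\<Sum>j<2 * n. E n (int j * fst y) * F j)
     + 2 * (\<Sum>k<n. rep n (int k) y 0 0 * K k 0 0 + rep n (int k) y 0 1 * K k 1 0
             + rep n (int k) y 1 0 * K k 0 1 + rep n (int k) y 1 1 * K k 1 1)"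
    unfolding P sum_split_helper S1 S2 ..
  also have "\<dots> = 0" using hF hK unfolding F_def K_def by simp
  finally have "v g0 * of_nat (6 * n) = 0" using A by simp
  then show ?thesis using n by simp
qed


lemma int_eig:
  fixes I :: "'a set" and M :: "'a \<Rightarrow> 'a \<Rightarrow> int" and v :: "'a \<Rightarrow> complex"
  assumes fin: "finite I" and nz: "\<exists>g\<in>I. v g \<noteq> 0"
    and ev: "\<forall>g\<in>I. (\<Sum>h\<in>I. of_int (M g h) * v h) = mu * v g" and rat: "mu \<in> \<rat>"
  shows "mu \<in> \<int>"
proof -
  define N where "N = card I"
  obtain f where f: "bij_betw f {0..<N} I" using ex_bij_betw_nat_finite[OF fin] N_def by blast
  define B where "B = mat N N (\<lambda>(i,j). M (f i) (f j))"
  define A where "A = map_mat (of_int :: int \<Rightarrow> complex) B"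
  have B: "B \<in> carrier_mat N N" unfolding B_def by simp
  have A: "A \<in> carrier_mat N N" unfolding A_def using B by simp
  define w where "w = vec N (\<lambda>i. v (f i))"
  have "eigenvector A w mu"
    unfolding eigenvector_def
  proof (intro conjI)
    show "w \<in> carrier_vec (dim_row A)" using A w_def by simp
    obtain g where g: "g \<in> I" "v g \<noteq> 0" using nz by blast
    then obtain i where i: "i < N" "f i = g" using f unfolding bij_betw_def by (auto simp: image_iff)
    show "w \<noteq> 0\<^sub>v (dim_row A)"
    proof
      assume "w = 0\<^sub>v (dim_row A)"
      then have "w $ i = 0" using i A by simp
      then show False using i g w_def by simp
    qed
    show "A *\<^sub>v w = mu \<cdot>\<^sub>v w"
    proof (rule eq_vecI)
      fix i assume "i < dim_vec (mu \<cdot>\<^sub>v w)"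
      then have i: "i < N" using w_def by simp
      have "(A *\<^sub>v w) $ i = (\<Sum>j<N. of_int (M (f i) (f j)) * v (f j))"
        using i A unfolding A_def B_def w_def
        by (simp add: scalar_prod_def atLeast0LessThan mult.commute)
      also have "\<dots> = (\<Sum>h\<in>I. of_int (M (f i) h) * v h)"
        using sum.reindex_bij_betw[OF f, of "\<lambda>h. of_int (M (f i) h) * v h"]
        by (simp add: atLeast0LessThan)
      also have "\<dots> = mu * v (f i)" using ev f i unfolding bij_betw_def by auto
      finally show "(A *\<^sub>v w) $ i = (mu \<cdot>\<^sub>v w) $ i" using i w_def by simp
    qed (use A w_def in simp)
  qed
  then have "eigenvalue A mu" unfolding eigenvalue_def by blast
  then have root: "poly (char_poly A) mu = 0" using eigenvalue_root_char_poly[OF A] by simp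
  have "char_poly A = map_poly of_int (char_poly B)"
    unfolding A_def by (rule of_int_hom.char_poly_hom[OF B])
  with root have r: "poly (map_poly of_int (char_poly B)) mu = 0" by simp
  have "lead_coeff (char_poly B) = 1" using degree_monic_char_poly[OF B] by simp
  with r have "algebraic_int mu" unfolding algebraic_int_altdef_ipoly by blast
  then show ?thesis using rational_algebraic_int_is_int rat by blast
qed

lemma negmod: assumes "l < n"
  shows "(- (2 * int l)) mod (2 * int n) = (if l = 0 then 0 else 2 * int n - 2 * int l)"
proof (cases "l = 0")
  case False
  have "- (2 * int l) = (2 * int n - 2 * int l) + (-1) * (2 * int n)" by simp
  then have "(- (2 * int l)) mod (2 * int n) = (2 * int n - 2 * int l) mod (2 * int n)"
    by (metis mod_mult_self1)
  also have "\<dots> = 2 * int n - 2 * int l" using assms False by (intro mod_pos_pos_trivial) auto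
  finally show ?thesis using False by simp
qed simp

lemma elt_2l: assumes "l < n" "0 \<le> e" "e < 3" shows "elt n (2 * int l) e = (2 * int l, e)"
  using assms by (simp add: elt_def)

lemma elt_m2l: "elt n (-2 * int l) 2 = ((- (2 * int l)) mod (2 * int n), 2)"
  and elt_m2l': "elt n (- (2 * int l)) 2 = ((- (2 * int l)) mod (2 * int n), 2)"
  by (simp_all add: elt_def)

lemma inj_2l: "inj_on (\<lambda>l. elt n (2 * int l) e) L" if "L \<subseteq> {0..<n}" "0 \<le> e" "e < 3"
  using that by (auto simp: inj_on_def elt_2l subset_iff)

lemma inj_m2l: "inj_on (\<lambda>l. elt n (-2 * int l) 2) L" if "L \<subseteq> {0..<n}"
proof (rule inj_onI)
  fix a b assume ab: "a \<in> L" "b \<in> L" "elt n (-2 * int a) 2 = elt n (-2 * int b) 2"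
  then have "a < n" "b < n" using that by auto
  then show "a = b" using ab(3) unfolding elt_m2l by (simp add: negmod split: if_splits)
qed

lemma sum_img: assumes "L \<subseteq> {0..<n}" "0 \<le> e" "e < 3"
  shows "(\<Sum>x\<in>(\<lambda>l. elt n (2 * int l) e) ` L. f x) = (\<Sum>l\<in>L. f (2 * int l, e))"
proof -
  have "(\<Sum>x\<in>(\<lambda>l. elt n (2 * int l) e) ` L. f x) = (\<Sum>l\<in>L. f (elt n (2 * int l) e))"
    using sum.reindex[OF inj_2l[OF assms]] by (simp add: comp_def)
  also have "\<dots> = (\<Sum>l\<in>L. f (2 * int l, e))"
    by (intro sum.cong refl) (use assms in \<open>auto simp: elt_2l\<close>)
  finally show ?thesis .
qed

lemma sum_img2: assumes "L \<subseteq> {0..<n}"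
  shows "(\<Sum>x\<in>(\<lambda>l. elt n (-2 * int l) 2) ` L. f x) = (\<Sum>l\<in>L. f ((- (2 * int l)) mod (2 * int n), 2))"
  using sum.reindex[OF inj_m2l[OF assms]] by (simp add: comp_def elt_m2l')

lemma sum_S:
  assumes n: "n \<ge> 1" and R: "R \<subseteq> {0..<n}" and L: "L \<subseteq> {0..<n}" and S2: "S2 \<subseteq> {(i, e) \<in> U n. odd i}"
  shows "(\<Sum>x\<in>(\<lambda>r. elt n (2 * int r) 0) ` R \<union> (\<lambda>l. elt n (2 * int l) 1) ` L \<union> (\<lambda>l. elt n (- 2 * int l) 2) ` L \<union> S2. f x)
    = (\<Sum>r\<in>R. f (2 * int r, 0)) + (\<Sum>l\<in>L. f (2 * int l, 1)) + (\<Sum>l\<in>L. f ((- (2 * int l)) mod (2 * int n), 2)) + (\<Sum>x\<in>S2. f x)"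
proof -
  let ?A = "(\<lambda>r. elt n (2 * int r) 0) ` R" and ?B = "(\<lambda>l. elt n (2 * int l) 1) ` L"
    and ?C = "(\<lambda>l. elt n (- 2 * int l) 2) ` L"
  have S2U: "S2 \<subseteq> U n" using S2 by auto
  have fin: "finite R" "finite L" "finite S2"
    using finite_subset[OF R] finite_subset[OF L] finite_subset[OF S2U] by auto
  have fS2: "finite S2" by (rule fin(3))
  have sA: "\<And>x. x \<in> ?A \<Longrightarrow> snd x = 0" using R by (auto simp: elt_2l subset_iff)
  have sB: "\<And>x. x \<in> ?B \<Longrightarrow> snd x = 1" using L by (auto simp: elt_2l subset_iff)
  have sC: "\<And>x. x \<in> ?C \<Longrightarrow> snd x = 2" by (auto simp: elt_m2l')
  have eA: "\<And>x. x \<in> ?A \<union> ?B \<union> ?C \<Longrightarrow> even (fst x)"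
    using R L by (auto simp: elt_2l elt_m2l' subset_iff even_mod2n)
  have oS: "\<And>x. x \<in> S2 \<Longrightarrow> odd (fst x)" using S2 by auto
  have d1: "?A \<inter> ?B = {}"
  proof (intro equalityI subsetI)
    fix x assume x: "x \<in> ?A \<inter> ?B"
    have "snd x = 0" using sA x by blast
    moreover have "snd x = 1" using sB x by blast
    ultimately show "x \<in> {}" by simp
  qed simp
  have d2: "(?A \<union> ?B) \<inter> ?C = {}"
  proof (intro equalityI subsetI)
    fix x assume x: "x \<in> (?A \<union> ?B) \<inter> ?C"
    have "snd x = 0 \<or> snd x = 1" using sA sB x by blast
    moreover have "snd x = 2" using sC x by blast
    ultimately show "x \<in> {}" by auto
  qed simp
  have d3: "(?A \<union> ?B \<union> ?C) \<inter> S2 = {}"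
  proof (intro equalityI subsetI)
    fix x assume x: "x \<in> (?A \<union> ?B \<union> ?C) \<inter> S2"
    have "even (fst x)" using eA x by blast
    moreover have "odd (fst x)" using oS x by blast
    ultimately show "x \<in> {}" by simp
  qed simp
  have "(\<Sum>x\<in>?A \<union> ?B \<union> ?C \<union> S2. f x) = sum f (?A \<union> ?B \<union> ?C) + sum f S2"
    by (rule sum.union_disjoint) (use fin fS2 d3 in auto)
  also have "sum f (?A \<union> ?B \<union> ?C) = sum f (?A \<union> ?B) + sum f ?C"
    by (rule sum.union_disjoint) (use fin d2 in auto)
  also have "sum f (?A \<union> ?B) = sum f ?A + sum f ?B"
    by (rule sum.union_disjoint) (use fin d1 in auto)
  also have "sum f ?A = (\<Sum>r\<in>R. f (2 * int r, 0))" by (rule sum_img[OF R]) auto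
  also have "sum f ?B = (\<Sum>l\<in>L. f (2 * int l, 1))" by (rule sum_img[OF L]) auto
  also have "sum f ?C = (\<Sum>l\<in>L. f ((- (2 * int l)) mod (2 * int n), 2))" by (rule sum_img2[OF L])
  finally show ?thesis .
qed


definition aS :: "nat \<Rightarrow> nat set \<Rightarrow> int \<Rightarrow> complex" where
  "aS n A k = (\<Sum>r\<in>A. E n (k * (2 * int r)))"

definition X2 :: "nat \<Rightarrow> uelt set \<Rightarrow> int \<Rightarrow> nat \<Rightarrow> nat \<Rightarrow> complex" where
  "X2 n S2 k p q = (\<Sum>x\<in>S2. rep n k x p q)"

lemma rho_SR: assumes "R \<subseteq> {0..<n}"
  shows "charsum (rho n j) ((\<lambda>r. elt n (2 * int r) 0) ` R) = aS n R (int j)"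
proof -
  have "charsum (rho n j) ((\<lambda>r. elt n (2 * int r) 0) ` R) = (\<Sum>r\<in>R. rho n j (2 * int r, 0))"
    unfolding charsum_def by (rule sum_img[OF assms]) auto
  then show ?thesis by (simp add: rho_E aS_def)
qed

lemma chi_S2: assumes "S2 \<subseteq> {(i, e) \<in> U n. odd i}"
  shows "charsum (chi n j) S2 = (\<Sum>x\<in>S2. E n (int j * fst x))"
  unfolding charsum_def by (intro sum.cong refl) (use assms in \<open>auto simp: chi_E\<close>)

lemma SLs_U: assumes "n \<ge> 1" shows "(\<lambda>l. elt n (2 * int l) 0) ` L \<subseteq> U n"
  using elt_U[OF assms] by auto

lemma symL: assumes n: "n \<ge> 1" and L: "L \<subseteq> {0..<n}"
  and sym: "uinvset n ((\<lambda>l. elt n (2 * int l) 0) ` L) = (\<lambda>l. elt n (2 * int l) 0) ` L"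
  shows "(\<Sum>l\<in>L. E n (k * (- (2 * int l)))) = aS n L k"
proof -
  have "(\<Sum>x\<in>(\<lambda>l. elt n (2 * int l) 0) ` L. E n (k * fst (uinv n x))) = (\<Sum>x\<in>(\<lambda>l. elt n (2 * int l) 0) ` L. E n (k * fst x))"
    by (rule sym_sum[OF SLs_U[OF n] sym])
  moreover have "(\<Sum>x\<in>(\<lambda>l. elt n (2 * int l) 0) ` L. E n (k * fst (uinv n x))) = (\<Sum>l\<in>L. E n (k * (- (2 * int l))))"
  proof -
    have "(\<Sum>x\<in>(\<lambda>l. elt n (2 * int l) 0) ` L. E n (k * fst (uinv n x))) = (\<Sum>l\<in>L. E n (k * fst (uinv n (2 * int l, 0))))"
      by (rule sum_img[OF L]) auto
    also have "\<dots> = (\<Sum>l\<in>L. E n (k * (- (2 * int l))))"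
      by (intro sum.cong refl) (simp add: uinv_def elt_def E_mult_mod[OF n])
    finally show ?thesis .
  qed
  moreover have "(\<Sum>x\<in>(\<lambda>l. elt n (2 * int l) 0) ` L. E n (k * fst x)) = aS n L k"
  proof -
    have "(\<Sum>x\<in>(\<lambda>l. elt n (2 * int l) 0) ` L. E n (k * fst x)) = (\<Sum>l\<in>L. E n (k * fst (2 * int l, 0::int)))"
      by (rule sum_img[OF L]) auto
    then show ?thesis by (simp add: aS_def)
  qed
  ultimately show ?thesis by simp
qed

lemma lin_val:
  assumes n: "n \<ge> 1" and R: "R \<subseteq> {0..<n}" and L: "L \<subseteq> {0..<n}" and S2: "S2 \<subseteq> {(i, e) \<in> U n. odd i}"
  and sym: "uinvset n ((\<lambda>l. elt n (2 * int l) 0) ` L) = (\<lambda>l. elt n (2 * int l) 0) ` L"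
  shows "(\<Sum>x\<in>(\<lambda>r. elt n (2 * int r) 0) ` R \<union> (\<lambda>l. elt n (2 * int l) 1) ` L \<union> (\<lambda>l. elt n (- 2 * int l) 2) ` L \<union> S2. E n (k * fst x))
    = aS n R k + 2 * aS n L k + (\<Sum>x\<in>S2. E n (k * fst x))"
  unfolding sum_S[OF n R L S2] using symL[OF n L sym, of k]
  by (simp add: E_mult_mod[OF n] aS_def)

lemma rep_even: assumes "even i" "p < 2" "q < 2"
  shows "rep n k (i, e) p q = (if p = q then E n (k * i) * Z (if q = 0 then e else - e) else 0)"
  using assms by (auto simp: rep_def less_2_cases_iff)

lemma rep_odd_diag: assumes "odd i" shows "rep n k (i, e) p p = 0"
  using assms by (simp add: rep_def)

lemma rep_val:
  assumes n: "n \<ge> 1" and R: "R \<subseteq> {0..<n}" and L: "L \<subseteq> {0..<n}" and S2: "S2 \<subseteq> {(i, e) \<in> U n. odd i}"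
  and sym: "uinvset n ((\<lambda>l. elt n (2 * int l) 0) ` L) = (\<lambda>l. elt n (2 * int l) 0) ` L"
  and p: "p < 2" and q: "q < 2"
  shows "(\<Sum>x\<in>(\<lambda>r. elt n (2 * int r) 0) ` R \<union> (\<lambda>l. elt n (2 * int l) 1) ` L \<union> (\<lambda>l. elt n (- 2 * int l) 2) ` L \<union> S2. rep n k x p q)
    = (if p = q then aS n R k - aS n L k else X2 n S2 k p q)"
proof -
  have e1: "even (2 * int l)" for l :: nat by simp
  have e2: "even ((- (2 * int l)) mod (2 * int n))" for l :: nat by (simp add: even_mod2n)
  have X0: "X2 n S2 k p p = 0" unfolding X2_def
    by (intro sum.neutral ballI) (use S2 in \<open>auto simp: rep_odd_diag\<close>)
  have sR: "(\<Sum>r\<in>R. rep n k (2 * int r, 0) p q) = (if p = q then aS n R k else 0)"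
    using p q by (simp add: rep_even aS_def)
  have sL1: "(\<Sum>l\<in>L. rep n k (2 * int l, 1) p q) = (if p = q then aS n L k * Z (if q = 0 then 1 else -1) else 0)"
    using p q by (simp add: rep_even aS_def sum_distrib_right)
  have sL2: "(\<Sum>l\<in>L. rep n k ((- (2 * int l)) mod (2 * int n), 2) p q) = (if p = q then aS n L k * Z (if q = 0 then 2 else -2) else 0)"
  proof -
    have "(\<Sum>l\<in>L. rep n k ((- (2 * int l)) mod (2 * int n), 2) p q)
        = (if p = q then (\<Sum>l\<in>L. E n (k * (- (2 * int l)))) * Z (if q = 0 then 2 else -2) else 0)"
      using p q e2 by (simp add: rep_even E_mult_mod[OF n] sum_distrib_right)
    then show ?thesis using symL[OF n L sym, of k] by simp
  qed
  have Zq: "Z (if q = 0 then 1 else -1) + Z (if q = 0 then 2 else -2) = -1"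
    using Z_12 Z_neg1 Z_neg2 by (simp add: add.commute)
  show ?thesis
  proof (cases "p = q")
    case True
    have "aS n R k + aS n L k * Z (if q = 0 then 1 else -1) + aS n L k * Z (if q = 0 then 2 else -2) + 0
        = aS n R k + aS n L k * (Z (if q = 0 then 1 else -1) + Z (if q = 0 then 2 else -2))"
      by (simp add: algebra_simps)
    also have "\<dots> = aS n R k - aS n L k" using Zq by simp
    finally have *: "aS n R k + aS n L k * Z (if q = 0 then 1 else -1) + aS n L k * Z (if q = 0 then 2 else -2) + 0 = aS n R k - aS n L k" .
    show ?thesis unfolding sum_S[OF n R L S2] sR sL1 sL2 using True X0 *
      by (simp add: X2_def)
  next
    case False
    then show ?thesis unfolding sum_S[OF n R L S2] sR sL1 sL2 by (simp add: X2_def)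
  qed
qed

lemma psi_val: assumes n: "n \<ge> 1" and S2: "S2 \<subseteq> {(i, e) \<in> U n. odd i}"
  shows "charsum2 n (psi n k) S2 = 2 * X2 n S2 (int k) 0 1 * X2 n S2 (int k) 1 0"
proof -
  have S2U: "\<And>x. x \<in> S2 \<Longrightarrow> x \<in> U n" using S2 by auto
  have X0: "X2 n S2 (int k) p p = 0" for p unfolding X2_def
    by (intro sum.neutral ballI) (use S2 in \<open>auto simp: rep_odd_diag\<close>)
  have "charsum2 n (psi n k) S2 = (\<Sum>x\<in>S2. \<Sum>y\<in>S2.
       (rep n (int k) x 0 0 * rep n (int k) y 0 0 + rep n (int k) x 0 1 * rep n (int k) y 1 0)
     + (rep n (int k) x 1 0 * rep n (int k) y 0 1 + rep n (int k) x 1 1 * rep n (int k) y 1 1))"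
    unfolding charsum2_def
    by (intro sum.cong refl) (simp add: psi_rep[OF umult_U[OF n]] rep_mult[OF n] sum2)
  also have "\<dots> = X2 n S2 (int k) 0 0 * X2 n S2 (int k) 0 0 + X2 n S2 (int k) 0 1 * X2 n S2 (int k) 1 0
      + (X2 n S2 (int k) 1 0 * X2 n S2 (int k) 0 1 + X2 n S2 (int k) 1 1 * X2 n S2 (int k) 1 1)"
    unfolding X2_def by (simp add: sum.distrib sum_product)
  also have "\<dots> = 2 * X2 n S2 (int k) 0 1 * X2 n S2 (int k) 1 0" using X0 by simp
  finally show ?thesis .
qed


lemma twodim_eig_t: assumes n: "n \<ge> 1" and S: "S \<subseteq> U n"
  and RS: "\<And>p q. p < 2 \<Longrightarrow> q < 2 \<Longrightarrow> (\<Sum>s\<in>S. rep n k s p q) = (if p = q then c else if p = 0 then X else Y)"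
  and t: "t ^ 2 = X * Y"
  shows "cay_eigenvalue n S (c + t)"
proof (cases "X = 0")
  case True
  then have t0: "t = 0" using t by simp
  show ?thesis
  proof (rule twodim_eig[OF n S, of 0 "\<lambda>p. if p = 0 then 1 else 0"])
    fix r :: nat assume r: "r < 2"
    then have "r = 0 \<or> r = 1" by auto
    then show "(\<Sum>p<2. (if p = 0 then 1 else 0) * (\<Sum>s\<in>S. rep n k s p r)) = (c + t) * (if r = 0 then 1 else 0)"
      using RS[of 0 r] r True t0 by (auto simp: sum2)
  qed auto
next
  case False
  show ?thesis
  proof (rule twodim_eig[OF n S, of 1 "\<lambda>p. if p = 0 then t else X"])
    fix r :: nat assume r: "r < 2"
    then have "r = 0 \<or> r = 1" by auto
    moreover have "t * c + X * Y = (c + t) * t" using t by (simp add: power2_eq_square algebra_simps)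
    ultimately show "(\<Sum>p<2. (if p = 0 then t else X) * (\<Sum>s\<in>S. rep n k s p r)) = (c + t) * (if r = 0 then t else X)"
      using RS[of 0 r] RS[of 1 r] r by (auto simp: sum2 algebra_simps)
  qed (use False in auto)
qed

lemma diag_sum: assumes "A \<subseteq> {0..<n}" "p < 2" "q < 2"
  shows "(\<Sum>s\<in>(\<lambda>r. elt n (2 * int r) 0) ` A. rep n k s p q) = (if p = q then aS n A k else 0)"
proof -
  have "(\<Sum>s\<in>(\<lambda>r. elt n (2 * int r) 0) ` A. rep n k s p q) = (\<Sum>r\<in>A. rep n k (2 * int r, 0) p q)"
    by (rule sum_img[OF assms(1)]) auto
  then show ?thesis using assms(2,3) by (simp add: rep_even aS_def)
qed

lemma c_int: assumes n: "n \<ge> 1" and R: "R \<subseteq> {0..<n}" and L: "L \<subseteq> {0..<n}"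
  and rat: "aS n R k - aS n L k \<in> \<rat>"
  shows "aS n R k - aS n L k \<in> \<int>"
proof (rule int_eig[OF finite_U[of n], where v = "\<lambda>g. rep n k g 0 0"
      and M = "\<lambda>g h. (if \<exists>s\<in>(\<lambda>r. elt n (2 * int r) 0) ` R. h = umult n s g then 1 else 0)
                   - (if \<exists>s\<in>(\<lambda>r. elt n (2 * int r) 0) ` L. h = umult n s g then 1 else 0)"])
  show "\<exists>g\<in>U n. rep n k g 0 0 \<noteq> 0" using zero_U[OF n] rep_one[of 0 0 n k] by force
  show "aS n R k - aS n L k \<in> \<rat>" by (rule rat)
  show "\<forall>g\<in>U n. (\<Sum>h\<in>U n. of_int ((if \<exists>s\<in>(\<lambda>r. elt n (2 * int r) 0) ` R. h = umult n s g then 1 else 0)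
                   - (if \<exists>s\<in>(\<lambda>r. elt n (2 * int r) 0) ` L. h = umult n s g then 1 else 0)) * rep n k h 0 0)
          = (aS n R k - aS n L k) * rep n k g 0 0"
  proof
    fix g assume g: "g \<in> U n"
    let ?SR = "(\<lambda>r. elt n (2 * int r) 0) ` R" and ?SL = "(\<lambda>r. elt n (2 * int r) 0) ` L"
    have SRU: "?SR \<subseteq> U n" and SLU: "?SL \<subseteq> U n" using SLs_U[OF n] by auto
    have one: "(\<Sum>s\<in>(\<lambda>r. elt n (2 * int r) 0) ` A. rep n k (umult n s g) 0 0) = aS n A k * rep n k g 0 0"
      if A: "A \<subseteq> {0..<n}" for A
    proof -
      have "(\<Sum>s\<in>(\<lambda>r. elt n (2 * int r) 0) ` A. rep n k (umult n s g) 0 0)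
          = (\<Sum>s\<in>(\<lambda>r. elt n (2 * int r) 0) ` A. rep n k s 0 0 * rep n k g 0 0 + rep n k s 0 1 * rep n k g 1 0)"
        by (intro sum.cong refl) (simp add: rep_mult[OF n] sum2)
      also have "\<dots> = aS n A k * rep n k g 0 0"
        using diag_sum[OF A, of 0 0 k] diag_sum[OF A, of 0 1 k] by (simp add: sum.distrib sum_distrib_right[symmetric])
      finally show ?thesis .
    qed
    have "(\<Sum>h\<in>U n. of_int ((if \<exists>s\<in>?SR. h = umult n s g then 1 else 0)
                   - (if \<exists>s\<in>?SL. h = umult n s g then 1 else 0)) * rep n k h 0 0)
        = (\<Sum>h\<in>U n. cay_adj n ?SR g h * rep n k h 0 0) - (\<Sum>h\<in>U n. cay_adj n ?SL g h * rep n k h 0 0)"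
      unfolding sum_subtractf[symmetric] by (intro sum.cong refl) (auto simp: cay_adj_def algebra_simps)
    also have "\<dots> = (\<Sum>s\<in>?SR. rep n k (umult n s g) 0 0) - (\<Sum>s\<in>?SL. rep n k (umult n s g) 0 0)"
      using adj_sum[OF n SRU g] adj_sum[OF n SLU g] by simp
    also have "\<dots> = (aS n R k - aS n L k) * rep n k g 0 0"
      using one[OF R] one[OF L] by (simp add: algebra_simps)
    finally show "(\<Sum>h\<in>U n. of_int ((if \<exists>s\<in>?SR. h = umult n s g then 1 else 0)
                   - (if \<exists>s\<in>?SL. h = umult n s g then 1 else 0)) * rep n k h 0 0) = (aS n R k - aS n L k) * rep n k g 0 0" .
  qed
qed

lemma sq_from_eqs: fixes d X Y a b :: complex
  assumes "d * a = X * b" "d * b = Y * a" "a \<noteq> 0 \<or> b \<noteq> 0"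
  shows "d ^ 2 = X * Y"
proof -
  have "d ^ 2 * a = X * Y * a" using assms(1,2)
    by (metis (no_types, lifting) mult.assoc mult.left_commute power2_eq_square)
  moreover have "d ^ 2 * b = X * Y * b" using assms(1,2)
    by (metis (no_types, lifting) mult.assoc mult.left_commute mult.commute power2_eq_square)
  ultimately show ?thesis using assms(3) by auto
qed

lemma half_rat: fixes d :: complex assumes "4 * d ^ 2 = of_int m ^ 2" shows "d \<in> \<rat>"
proof -
  have "(2 * d - of_int m) * (2 * d + of_int m) = 0"
    using assms by (simp add: algebra_simps power2_eq_square)
  then have "2 * d - of_int m = 0 \<or> 2 * d + of_int m = 0" by simp
  then have "d = of_int m / 2 \<or> d = of_int (- m) / 2"
  proof
    assume "2 * d - of_int m = 0" then have "2 * d = of_int m" by simp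
    then show ?thesis by (metis nonzero_mult_div_cancel_left zero_neq_numeral)
  next
    assume "2 * d + of_int m = 0" then have "2 * d = of_int (- m)" by (simp add: eq_neg_iff_add_eq_0)
    then show ?thesis by (metis nonzero_mult_div_cancel_left zero_neq_numeral)
  qed
  moreover have "of_int m / (2::complex) \<in> \<rat>" "of_int (- m) / (2::complex) \<in> \<rat>"
    by (intro Rats_divide; simp)+
  ultimately show ?thesis by metis
qed

lemma Ints_Rats: "x \<in> \<int> \<Longrightarrow> x \<in> \<rat>" using Ints_subset_Rats by blast


theorem theorem3p2:
  fixes n :: nat and R L :: "nat set" and S2 :: "uelt set"
  assumes "n \<ge> 1"
    and "R \<subseteq> {0..<n}" and "L \<subseteq> {0..<n}"
    and "S2 \<subseteq> {(i, e) \<in> U n. odd i}"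
  defines "S1 \<equiv> (\<lambda>r. elt n (2 * int r) 0) ` R
             \<union> (\<lambda>l. elt n (2 * int l) 1) ` L
             \<union> (\<lambda>l. elt n (- 2 * int l) 2) ` L"
  defines "S \<equiv> S1 \<union> S2"
  defines "SR \<equiv> (\<lambda>r. elt n (2 * int r) 0) ` R"
  defines "SL \<equiv> (\<lambda>l. elt n (2 * int l) 0) ` L"
  assumes "uone n \<notin> S" and "uinvset n S = S"
    and "uinvset n SL = SL"
  shows "cay_integral n S \<longleftrightarrow>
    ((\<forall>j<2 * n. 3 * charsum (rho n j) SR + charsum (chi n j) S2 \<in> \<int>
              \<and> 3 * charsum (rho n j) SL + charsum (chi n j) S2 \<in> \<int>)
     \<and> (\<forall>k<n. \<exists>m::int. 2 * charsum2 n (psi n k) S2 = of_int (m ^ 2)))"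
proof -
  note n = assms(1) and R = assms(2) and L = assms(3) and S2 = assms(4)
  note symS = assms(10) and symL0 = assms(11)
  have S_eq: "S = (\<lambda>r. elt n (2 * int r) 0) ` R \<union> (\<lambda>l. elt n (2 * int l) 1) ` L \<union> (\<lambda>l. elt n (- 2 * int l) 2) ` L \<union> S2"
    unfolding S_def S1_def by simp
  have SU: "S \<subseteq> U n" unfolding S_eq using elt_U[OF n] S2 by auto
  have symL: "uinvset n ((\<lambda>l. elt n (2 * int l) 0) ` L) = (\<lambda>l. elt n (2 * int l) 0) ` L"
    using symL0 unfolding SL_def .
  have rhoR: "\<And>j. charsum (rho n j) SR = aS n R (int j)" unfolding SR_def by (rule rho_SR[OF R])
  have rhoL: "\<And>j. charsum (rho n j) SL = aS n L (int j)" unfolding SL_def by (rule rho_SR[OF L])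
  define x2 where "x2 k = (\<Sum>x\<in>S2. E n (k * fst x))" for k
  have chiS2: "\<And>j. charsum (chi n j) S2 = x2 (int j)" unfolding x2_def by (rule chi_S2[OF S2])
  have linv: "\<And>k. (\<Sum>x\<in>S. E n (k * fst x)) = aS n R k + 2 * aS n L k + x2 k"
    unfolding S_eq x2_def by (rule lin_val[OF n R L S2 symL])
  define X where "X k = X2 n S2 k 0 1" for k
  define Y where "Y k = X2 n S2 k 1 0" for k
  define c where "c k = aS n R k - aS n L k" for k
  have repv: "\<And>k p q. p < 2 \<Longrightarrow> q < 2 \<Longrightarrow> (\<Sum>x\<in>S. rep n k x p q) = (if p = q then c k else if p = 0 then X k else Y k)"
  proof -
    fix k p q assume p: "p < (2::nat)" and q: "q < (2::nat)"
    have "(\<Sum>x\<in>S. rep n k x p q) = (if p = q then aS n R k - aS n L k else X2 n S2 k p q)"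
      unfolding S_eq by (rule rep_val[OF n R L S2 symL p q])
    moreover have "p \<noteq> q \<Longrightarrow> p = 0 \<Longrightarrow> q = 1" "p \<noteq> q \<Longrightarrow> p \<noteq> 0 \<Longrightarrow> p = 1 \<and> q = 0" using p q by auto
    ultimately show "(\<Sum>x\<in>S. rep n k x p q) = (if p = q then c k else if p = 0 then X k else Y k)"
      unfolding X_def Y_def c_def by auto
  qed
  have psiv: "\<And>k. charsum2 n (psi n k) S2 = 2 * X (int k) * Y (int k)"
    unfolding X_def Y_def by (rule psi_val[OF n S2])
  show ?thesis
  proof
    assume int: "cay_integral n S"
    have ev_int: "\<And>mu. cay_eigenvalue n S mu \<Longrightarrow> mu \<in> \<int>" using int unfolding cay_integral_def by blast
    have key: "3 * aS n R k + x2 k \<in> \<int> \<and> 3 * aS n L k + x2 k \<in> \<int> \<and> (\<exists>m::int. 4 * (X k * Y k) = of_int m ^ 2)" for k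
    proof -
      define t where "t = csqrt (X k * Y k)"
      have lam: "aS n R k + 2 * aS n L k + x2 k \<in> \<int>"
        using ev_int[OF lin_eig[OF n SU, of k]] linv by simp
      have mu1: "c k + t \<in> \<int>"
        by (rule ev_int[OF twodim_eig_t[OF n SU repv]]) (simp_all add: t_def)
      have mu2: "c k + (- t) \<in> \<int>"
        by (rule ev_int[OF twodim_eig_t[OF n SU repv]]) (simp_all add: t_def)
      have A: "3 * aS n R k + x2 k = (aS n R k + 2 * aS n L k + x2 k) + (c k + t) + (c k + (- t))"
        by (simp add: c_def algebra_simps)
      have crat: "c k \<in> \<rat>"
      proof -
        have "c k = ((c k + t) + (c k + (- t))) / 2" by simp
        moreover have "(c k + t) + (c k + (- t)) \<in> \<rat>" using mu1 mu2 Ints_Rats by (blast intro: Rats_add)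
        moreover have "((c k + t) + (c k + (- t))) / 2 \<in> \<rat>"
          using calculation(2) by (rule Rats_divide) simp
        ultimately show ?thesis by simp
      qed
      have cint: "c k \<in> \<int>" using c_int[OF n R L] crat unfolding c_def by blast
      have B: "3 * aS n L k + x2 k = (aS n R k + 2 * aS n L k + x2 k) - c k"
        by (simp add: c_def algebra_simps)
      have tt: "(c k + t) - (c k + (- t)) \<in> \<int>" using mu1 mu2 by (rule Ints_diff)
      then obtain m where m: "(c k + t) - (c k + (- t)) = of_int m" by (elim Ints_cases)
      have "4 * (X k * Y k) = (2 * t) ^ 2" by (simp add: t_def power_mult_distrib)
      also have "2 * t = of_int m" using m by simp
      finally have "4 * (X k * Y k) = of_int m ^ 2" .
      moreover have "3 * aS n R k + x2 k \<in> \<int>" unfolding A by (rule Ints_add[OF Ints_add[OF lam mu1] mu2])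
      moreover have "3 * aS n L k + x2 k \<in> \<int>" unfolding B by (rule Ints_diff[OF lam cint])
      ultimately show ?thesis by blast
    qed
    show "(\<forall>j<2 * n. 3 * charsum (rho n j) SR + charsum (chi n j) S2 \<in> \<int>
              \<and> 3 * charsum (rho n j) SL + charsum (chi n j) S2 \<in> \<int>)
     \<and> (\<forall>k<n. \<exists>m::int. 2 * charsum2 n (psi n k) S2 = of_int (m ^ 2))"
    proof (intro conjI allI impI)
      fix j assume "j < 2 * n"
      show "3 * charsum (rho n j) SR + charsum (chi n j) S2 \<in> \<int>"
        using key[of "int j"] by (simp add: rhoR chiS2)
      show "3 * charsum (rho n j) SL + charsum (chi n j) S2 \<in> \<int>"
        using key[of "int j"] by (simp add: rhoL chiS2)
    next
      fix k assume "k < n"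
      obtain m :: int where m: "4 * (X (int k) * Y (int k)) = of_int m ^ 2" using key[of "int k"] by blast
      have "2 * charsum2 n (psi n k) S2 = of_int (m ^ 2)" using m by (simp add: psiv algebra_simps)
      then show "\<exists>m::int. 2 * charsum2 n (psi n k) S2 = of_int (m ^ 2)" by blast
    qed
  next
    assume conds: "(\<forall>j<2 * n. 3 * charsum (rho n j) SR + charsum (chi n j) S2 \<in> \<int>
              \<and> 3 * charsum (rho n j) SL + charsum (chi n j) S2 \<in> \<int>)
     \<and> (\<forall>k<n. \<exists>m::int. 2 * charsum2 n (psi n k) S2 = of_int (m ^ 2))"
    have AB: "3 * aS n R (int j) + x2 (int j) \<in> \<int>" "3 * aS n L (int j) + x2 (int j) \<in> \<int>" if "j < 2 * n" for j
      using conds that by (simp_all add: rhoR rhoL chiS2)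
    have Cm: "\<exists>m::int. 4 * (X (int k) * Y (int k)) = of_int m ^ 2" if kn: "k < n" for k
    proof -
      obtain m :: int where "2 * charsum2 n (psi n k) S2 = of_int (m ^ 2)" using conds kn by blast
      then have "4 * (X (int k) * Y (int k)) = of_int m ^ 2" by (simp add: psiv algebra_simps)
      then show ?thesis by blast
    qed
    show "cay_integral n S"
      unfolding cay_integral_def
    proof (intro allI impI)
      fix mu assume "cay_eigenvalue n S mu"
      then obtain v where nz: "\<exists>g\<in>U n. v g \<noteq> 0"
        and ev: "\<forall>g\<in>U n. (\<Sum>h\<in>U n. cay_adj n S g h * v h) = mu * v g"
        unfolding cay_eigenvalue_def by blast
      have ev': "\<forall>g\<in>U n. (\<Sum>s\<in>S. v (umult n s g)) = mu * v g"
        using ev adj_sum[OF n SU] by simp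
      have rat: "mu \<in> \<rat>"
      proof (cases "\<exists>j<2 * n. (\<Sum>g\<in>U n. E n (int j * fst g) * v g) \<noteq> 0")
        case True
        then obtain j where j: "j < 2 * n" and F: "(\<Sum>g\<in>U n. E n (int j * fst g) * v g) \<noteq> 0" by blast
        have "mu = (\<Sum>s\<in>S. E n (int j * fst s))"
          using lin_fourier[OF n SU symS ev', of "int j"] F by simp
        also have "\<dots> = ((3 * aS n R (int j) + x2 (int j)) + 2 * (3 * aS n L (int j) + x2 (int j))) / 3"
          by (simp add: linv field_simps)
        finally have mu: "mu = \<dots>" .
        have "(3 * aS n R (int j) + x2 (int j)) + 2 * (3 * aS n L (int j) + x2 (int j)) \<in> \<rat>"
          by (rule Rats_add[OF Ints_Rats[OF AB(1)[OF j]] Rats_mult[OF _ Ints_Rats[OF AB(2)[OF j]]]]) simp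
        then show ?thesis unfolding mu by (rule Rats_divide) simp
      next
        case False
        then have F0: "\<forall>j<2 * n. (\<Sum>g\<in>U n. E n (int j * fst g) * v g) = 0" by blast
        show ?thesis
        proof (cases "\<exists>k<n. \<exists>p<2. \<exists>q<2. (\<Sum>g\<in>U n. rep n (int k) g p q * v g) \<noteq> 0")
          case True
          then obtain k p q where k: "k < n" and p: "p < 2" and q: "q < 2"
            and K: "(\<Sum>g\<in>U n. rep n (int k) g p q * v g) \<noteq> 0" by blast
          define a where "a = (\<Sum>g\<in>U n. rep n (int k) g 0 q * v g)"
          define b where "b = (\<Sum>g\<in>U n. rep n (int k) g 1 q * v g)"
          have ab: "a \<noteq> 0 \<or> b \<noteq> 0" using K p unfolding a_def b_def by (auto simp: less_2_cases_iff)
          have e0: "mu * a = c (int k) * a + X (int k) * b"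
            using rep_fourier[OF n SU symS ev', of 0 q "int k"] q unfolding a_def b_def by (simp add: sum2 repv)
          have e1: "mu * b = Y (int k) * a + c (int k) * b"
            using rep_fourier[OF n SU symS ev', of 1 q "int k"] q unfolding a_def b_def by (simp add: sum2 repv)
          have "(mu - c (int k)) ^ 2 = X (int k) * Y (int k)"
            by (rule sq_from_eqs[OF _ _ ab]) (use e0 e1 in \<open>simp_all add: algebra_simps\<close>)
          moreover obtain m :: int where "4 * (X (int k) * Y (int k)) = of_int m ^ 2" using Cm[OF k] by blast
          ultimately have drat: "mu - c (int k) \<in> \<rat>" by (intro half_rat[of _ m]) simp
          have kk: "k < 2 * n" using k by simp
          have "c (int k) = ((3 * aS n R (int k) + x2 (int k)) - (3 * aS n L (int k) + x2 (int k))) / 3"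
            by (simp add: c_def field_simps)
          moreover have "(3 * aS n R (int k) + x2 (int k)) - (3 * aS n L (int k) + x2 (int k)) \<in> \<rat>"
            using Rats_diff[OF Ints_Rats[OF AB(1)[OF kk]] Ints_Rats[OF AB(2)[OF kk]]] .
          ultimately have crat: "c (int k) \<in> \<rat>"
            by (metis Rats_divide Rats_of_int of_int_numeral)
          have "mu = c (int k) + (mu - c (int k))" by simp
          then show ?thesis using crat drat by (metis Rats_add)
        next
          case False
          then have K0: "\<forall>k<n. \<forall>p<2. \<forall>q<2. (\<Sum>g\<in>U n. rep n (int k) g p q * v g) = 0" by blast
          have "\<forall>g\<in>U n. v g = 0" using inversion[OF n _ F0 K0] by blast
          then show ?thesis using nz by blast
        qed
      qed
      show "mu \<in> \<int>"
      proof (rule int_eig[OF finite_U[of n], where v = v and M = "\<lambda>g h. if \<exists>s\<in>S. h = umult n s g then 1 else 0"])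
        show "\<exists>g\<in>U n. v g \<noteq> 0" by (rule nz)
        show "mu \<in> \<rat>" by (rule rat)
        show "\<forall>g\<in>U n. (\<Sum>h\<in>U n. of_int (if \<exists>s\<in>S. h = umult n s g then 1 else 0) * v h) = mu * v g"
        proof
          fix g assume g: "g \<in> U n"
          have "(\<Sum>h\<in>U n. of_int (if \<exists>s\<in>S. h = umult n s g then 1 else 0) * v h) = (\<Sum>h\<in>U n. cay_adj n S g h * v h)"
            by (intro sum.cong refl) (simp add: cay_adj_def)
          then show "(\<Sum>h\<in>U n. of_int (if \<exists>s\<in>S. h = umult n s g then 1 else 0) * v h) = mu * v g"
            using ev g by simp
        qed
      qed
    qed
  qed
qed

end
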